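(* Fix an integer $k\ge 1$. For $m\ge k$ let $w(m)$ be the maximal weight of a seed of span at most $m$ that solves the (linear) $(m,k)$-problem. Then $m-w(m)=\Theta\!\left(m^{\frac{k}{k+1}}\right)$ as $m\to\infty$.
   Context: A seed is a finite word over $\{\#,-\}$ ($-$ is called a joker); its span is its length and its weight its number of $\#$'s. A binary word is an $(m,k)$-similarity if it has length $m$ and exactly $k$ zeros. A seed $Q$ matches a binary word $w$ at position $j$ ($1\le j\le |w|-s(Q)+1$) if $w[j+t-1]=1$ for every $t$ with $Q[t]=\#$, and detects $w$ if it matches at some position. $Q$ solves the $(m,k)$-problem if it detects every $(m,k)$-similarity. *)

theory Defs
  imports Main "HOL-Library.Landau_Symbols"
begin

text \<open>A seed is a list over {#,-}: True encodes '#', False encodes the joker '-'.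
  A binary word is a list of bool: True encodes 1, False encodes 0.
  Positions are 0-indexed here (position j corresponds to the paper's j+1).\<close>

type_synonym seed = "bool list"
type_synonym bword = "bool list"

definition span :: "seed \<Rightarrow> nat" where
  "span Q = length Q"

definition weight :: "seed \<Rightarrow> nat" where
  "weight Q = length (filter id Q)"

definition is_similarity :: "nat \<Rightarrow> nat \<Rightarrow> bword \<Rightarrow> bool" where
  "is_similarity m k w \<longleftrightarrow> length w = m \<and> length (filter Not w) = k"

definition matches_at :: "seed \<Rightarrow> bword \<Rightarrow> nat \<Rightarrow> bool" where
  "matches_at Q w j \<longleftrightarrow> j + span Q \<le> length w \<and> (\<forall>t < span Q. Q ! t \<longrightarrow> w ! (j + t))"

definition detects :: "seed \<Rightarrow> bword \<Rightarrow> bool" where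
  "detects Q w \<longleftrightarrow> (\<exists>j. matches_at Q w j)"

definition solves :: "seed \<Rightarrow> nat \<Rightarrow> nat \<Rightarrow> bool" where
  "solves Q m k \<longleftrightarrow> (\<forall>w. is_similarity m k w \<longrightarrow> detects Q w)"

definition max_weight :: "nat \<Rightarrow> nat \<Rightarrow> nat" where
  "max_weight k m = Max {weight Q | Q. span Q \<le> m \<and> solves Q m k}"

end

theory Submission
  imports Defs "HOL-Library.Landau_Symbols"
begin


lemma digit_choice:
  fixes a :: int and p :: "nat \<Rightarrow> int"
  assumes a: "a \<ge> 1"
  shows "\<exists>j. 0 \<le> j \<and> j < a^N \<and> (\<forall>i<N. (p i - j) mod a^(Suc i) < a^i)"
proof (induction N)
  case 0 show ?case by (intro exI[of _ 0]) simp
next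
  case (Suc N)
  then obtain j where j: "0 \<le> j" "j < a^N" "\<forall>i<N. (p i - j) mod a^(Suc i) < a^i" by blast
  define x where "x = (p N - j) mod a^(Suc N)"
  define c where "c = x div a^N"
  have aN: "a^N > 0" using a by simp
  have x0: "0 \<le> x" "x < a^N * a" using a by (auto simp: x_def mult.commute)
  have c0: "0 \<le> c" using x0 aN by (simp add: c_def pos_imp_zdiv_nonneg_iff)
  have ca: "c < a" using x0 aN unfolding c_def by (smt (verit) mult.commute minus_mod_eq_div_mult mult_right_less_imp_less pos_mod_sign)
  hence ca1: "c \<le> a - 1" by simp
  define j' where "j' = j + c * a^N"
  have "j' < a^N + (a-1)*a^N" unfolding j'_def using j(2) mult_right_mono[OF ca1, of "a^N"] aN by linarith
  also have "\<dots> = a^Suc N" by (simp add: algebra_simps)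
  finally have j'lt: "j' < a^Suc N" .
  have "0 \<le> j'" using j c0 aN by (simp add: j'_def)
  moreover have "\<forall>i<Suc N. (p i - j') mod a^(Suc i) < a^i"
  proof (intro allI impI)
    fix i assume i: "i < Suc N"
    show "(p i - j') mod a^(Suc i) < a^i"
    proof (cases "i < N")
      case True
      have "a^(Suc i) dvd a^N" using True by (intro le_imp_power_dvd) simp
      hence d: "a^(Suc i) dvd c * a^N" by simp
      have "(p i - j') mod a^(Suc i) = (p i - j - c*a^N) mod a^(Suc i)" by (simp add: j'_def algebra_simps)
      also have "\<dots> = (p i - j) mod a^(Suc i)" using d
        by (simp add: mod_eq_dvd_iff)
      finally show ?thesis using j(3) True by simp
    next
      case False
      hence iN: "i = N" using i by simp
      have xe: "x = c * a^N + x mod a^N" by (metis c_def div_mult_mod_eq)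
      have e1: "p N - j' = (p N - j) - c*a^N" by (simp add: j'_def)
      have "(p N - j') mod a^(Suc N) = (x - c*a^N) mod a^(Suc N)"
        unfolding e1 x_def by (simp add: mod_diff_left_eq)
      also have "\<dots> = (x mod a^N) mod a^(Suc N)" using xe by (metis add_diff_cancel_left')
      also have "\<dots> = x mod a^N"
        using aN a by (intro mod_pos_pos_trivial) (auto intro: order.strict_trans2[OF pos_mod_bound[OF aN]] simp: mult_le_cancel_left1)
      also have "\<dots> < a^N" using aN by simp
      finally show ?thesis using iN by simp
    qed
  qed
  ultimately show ?case using j'lt by blast
qed




lemma count_mod:
  fixes M r s :: nat
  assumes "M > 0"
  shows "card {t. t < s \<and> t mod M < r} \<le> (s div M + 1) * r"
proof -
  have "card {t. t < s \<and> t mod M < r} \<le> card ({..s div M} \<times> {..<r})"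
  proof (rule card_inj_on_le[where f="\<lambda>t. (t div M, t mod M)"])
    show "inj_on (\<lambda>t. (t div M, t mod M)) {t. t < s \<and> t mod M < r}"
      by (intro inj_onI) (metis div_mult_mod_eq prod.inject)
    show "(\<lambda>t. (t div M, t mod M)) ` {t. t < s \<and> t mod M < r} \<subseteq> {..s div M} \<times> {..<r}"
      by (auto intro: div_le_mono)
  qed simp
  also have "\<dots> = (s div M + 1) * r" by simp
  finally show ?thesis .
qed

lemma weight_jokers: "weight Q + card {t. t < length Q \<and> \<not> Q ! t} = length Q"
proof -
  have "length (filter id Q) + length (filter (\<lambda>x. \<not> id x) Q) = length Q"
    by (rule sum_length_filter_compl)
  thus ?thesis unfolding weight_def by (simp add: length_filter_conv_card)
qed

lemma construction:
  fixes a k m :: nat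
  assumes a: "a \<ge> 1" and am: "a^k \<le> m"
  shows "\<exists>Q. span Q \<le> m \<and> solves Q m k \<and> m \<le> weight Q + (k+1) * (m div a + a^k)"
proof -
  define s where "s = m + 1 - a^k"
  define Q where "Q = map (\<lambda>t. \<forall>l<k. a^l \<le> t mod a^(Suc l)) [0..<s]"
  have ak1: "a^k \<ge> 1" using a by simp
  have lenQ: "length Q = s" by (simp add: Q_def)
  have Qt: "t < s \<Longrightarrow> Q ! t = (\<forall>l<k. a^l \<le> t mod a^(Suc l))" for t by (simp add: Q_def)
  have sm: "s \<le> m" using ak1 by (simp add: s_def)
  have solv: "solves Q m k"
    unfolding solves_def
  proof (intro allI impI)
    fix w assume "is_similarity m k w"
    hence lw: "length w = m" and nz: "length (filter Not w) = k" by (auto simp: is_similarity_def)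
    define Z where "Z = {i. i < m \<and> \<not> w ! i}"
    have cZ: "card Z = k" using nz lw by (simp add: length_filter_conv_card Z_def)
    have fZ: "finite Z" by (simp add: Z_def)
    define ps where "ps = sorted_list_of_set Z"
    have lps: "length ps = k" using cZ fZ by (simp add: ps_def)
    have sps: "set ps = Z" using fZ by (simp add: ps_def)
    obtain j :: int where j: "0 \<le> j" "j < int a ^ k"
      "\<forall>i<k. (int (ps ! i) - j) mod int a^(Suc i) < int a^i"
      using digit_choice[where a="int a" and p="\<lambda>i. int (ps ! i)" and N=k] a by auto
    define jn where "jn = nat j"
    have jnlt: "jn < a^k" using j by (simp add: jn_def nat_less_iff)
    have "matches_at Q w jn"
      unfolding matches_at_def span_def lenQ lw
    proof (intro conjI allI impI)
      show "jn + s \<le> m" using jnlt am by (simp add: s_def)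
      fix t assume ts: "t < s" and Qt1: "Q ! t"
      show "w ! (jn + t)"
      proof (rule ccontr)
        assume "\<not> w ! (jn + t)"
        moreover have "jn + t < m" using jnlt ts am by (simp add: s_def)
        ultimately have "jn + t \<in> set ps" using sps Z_def by auto
        then obtain i where i: "i < k" "ps ! i = jn + t" using lps by (metis in_set_conv_nth)
        have "int (ps ! i) - j = int t" using i j(1) by (simp add: jn_def)
        hence "int t mod int a^(Suc i) < int a^i" using j(3) i(1) by metis
        hence "t mod a^(Suc i) < a^i" by (metis of_nat_less_iff of_nat_mod of_nat_power)
        moreover have "a^i \<le> t mod a^(Suc i)" using Qt[OF ts] Qt1 i(1) by blast
        ultimately show False by simp
      qed
    qed
    thus "detects Q w" unfolding detects_def by blast
  qed
  have jok: "{t. t < length Q \<and> \<not> Q ! t} = (\<Union>l<k. {t. t < s \<and> t mod a^(Suc l) < a^l})"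
    using Qt lenQ by (auto simp del: power_Suc simp: not_le) (meson leD lessThan_iff)
  have "card {t. t < length Q \<and> \<not> Q ! t} \<le> (\<Sum>l<k. card {t. t < s \<and> t mod a^(Suc l) < a^l})"
    unfolding jok by (rule card_UN_le) simp
  also have "\<dots> \<le> (\<Sum>l<k. s div a + a^k)"
  proof (rule sum_mono)
    fix l assume l: "l \<in> {..<k}"
    have "card {t. t < s \<and> t mod a^(Suc l) < a^l} \<le> (s div a^(Suc l) + 1) * a^l"
      using a by (intro count_mod) simp
    also have "\<dots> = (s div a^(Suc l)) * a^l + a^l" by simp
    also have "(s div a^(Suc l)) * a^l \<le> s div a"
    proof -
      have "s div a^(Suc l) = (s div a) div a^l" by (simp add: div_mult2_eq)
      thus ?thesis by simp
    qed
    also have "a^l \<le> a^k" using a l by (intro power_increasing) auto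
    finally show "card {t. t < s \<and> t mod a^(Suc l) < a^l} \<le> s div a + a^k" by simp
  qed
  also have "\<dots> = k * (s div a + a^k)" by simp
  also have "\<dots> \<le> k * (m div a + a^k)" using sm by (intro mult_le_mono2 add_le_mono1 div_le_mono)
  finally have J: "card {t. t < length Q \<and> \<not> Q ! t} \<le> k * (m div a + a^k)" .
  have "m \<le> weight Q + (k+1) * (m div a + a^k)"
    using weight_jokers[of Q] J lenQ ak1 am unfolding s_def by (simp add: algebra_simps)
  moreover have "span Q \<le> m" using lenQ sm by (simp add: span_def)
  ultimately show ?thesis using solv by blast
qed




lemma lower_comb:
  fixes Q :: seed and m k :: nat
  assumes sol: "solves Q m k" and sm: "length Q \<le> m" and km: "k \<le> m"
  shows "(2 * length Q - m)^k \<le> (m - length Q + 1) * (length Q - weight Q)^k"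
proof (rule ccontr)
  define s where "s = length Q"
  define n where "n = m - s + 1"
  define J where "J = length Q - weight Q"
  define A where "A = {m - s..<s}"
  assume "\<not> ?thesis"
  moreover have "card A = 2 * length Q - m" using sm by (simp add: A_def s_def)
  ultimately have big: "n * J^k < card A ^ k" by (simp add: n_def J_def s_def)
  define Tup where "Tup = {xs. set xs \<subseteq> A \<and> length xs = k}"
  define B where "B j = {p \<in> A. \<not> Q ! (p - j)}" for j
  define Bad where "Bad j = {xs. set xs \<subseteq> B j \<and> length xs = k}" for j
  have fA: "finite A" by (simp add: A_def)
  have cTup: "card Tup = card A ^ k" unfolding Tup_def using fA by (rule card_lists_length_eq)
  have fTup: "finite Tup" unfolding Tup_def using fA by (rule finite_lists_length_eq)
  have jk: "card {t. t < length Q \<and> \<not> Q ! t} = J" using weight_jokers[of Q] by (simp add: J_def)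
  have cB: "card (B j) \<le> J" if j: "j < n" for j
  proof -
    have "card (B j) \<le> card {t. t < length Q \<and> \<not> Q ! t}"
    proof (rule card_inj_on_le[where f="\<lambda>p. p - j"])
      show "inj_on (\<lambda>p. p - j) (B j)"
        using j by (intro inj_onI) (auto simp: B_def A_def n_def)
      show "(\<lambda>p. p - j) ` B j \<subseteq> {t. t < length Q \<and> \<not> Q ! t}"
        by (auto simp: B_def A_def s_def)
    qed simp
    thus ?thesis using jk by simp
  qed
  have "card (\<Union>j<n. Bad j) \<le> (\<Sum>j<n. card (Bad j))" by (rule card_UN_le) simp
  also have "\<dots> \<le> (\<Sum>j<n. J^k)"
  proof (rule sum_mono)
    fix j assume "j \<in> {..<n}"
    hence "card (B j) \<le> J" using cB by simp
    moreover have "finite (B j)" using fA by (simp add: B_def)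
    ultimately show "card (Bad j) \<le> J^k" unfolding Bad_def
      by (simp add: card_lists_length_eq power_mono)
  qed
  also have "\<dots> = n * J^k" by simp
  finally have "card (\<Union>j<n. Bad j) < card Tup" using big cTup by linarith
  moreover have "(\<Union>j<n. Bad j) \<subseteq> Tup" by (auto simp: Bad_def Tup_def B_def)
  hence "finite (\<Union>j<n. Bad j)" using fTup by (rule finite_subset)
  ultimately have "\<not> Tup \<subseteq> (\<Union>j<n. Bad j)" using card_mono not_le by blast
  then obtain xs where xs: "xs \<in> Tup" "xs \<notin> (\<Union>j<n. Bad j)" by blast
  define Z0 where "Z0 = set xs"
  have Z0m: "Z0 \<subseteq> {..<m}" using xs(1) sm by (auto simp: Z0_def Tup_def A_def s_def)
  have cZ0: "card Z0 \<le> k" using xs(1) by (auto simp: Z0_def Tup_def card_length)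
  have "k - card Z0 \<le> card ({..<m} - Z0)"
    using Z0m km by (simp add: card_Diff_subset finite_subset)
  then obtain T where T: "T \<subseteq> {..<m} - Z0" "card T = k - card Z0" "finite T"
    by (rule obtain_subset_with_card_n)
  define Z where "Z = Z0 \<union> T"
  have Zm: "Z \<subseteq> {..<m}" using Z0m T by (auto simp: Z_def)
  have cZ: "card Z = k"
  proof -
    have "Z0 \<inter> T = {}" using T by auto
    hence "card Z = card Z0 + card T" unfolding Z_def using T(3) by (simp add: card_Un_disjoint Z0_def)
    thus ?thesis using T(2) cZ0 by simp
  qed
  define w where "w = map (\<lambda>i. i \<notin> Z) [0..<m]"
  have "is_similarity m k w"
  proof -
    have "{i. i < m \<and> \<not> (map (\<lambda>i. i \<notin> Z) [0..<m] ! i)} = Z" using Zm by auto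
    thus ?thesis unfolding is_similarity_def w_def using cZ
      by (simp add: length_filter_conv_card)
  qed
  with sol obtain j where mj: "matches_at Q w j" unfolding solves_def detects_def by blast
  hence jn: "j < n" and jm: "j + s \<le> m" by (auto simp: matches_at_def span_def w_def n_def s_def)
  have "xs \<notin> Bad j" using xs(2) jn by blast
  then obtain p where p: "p \<in> set xs" "\<not> p \<in> B j" using xs(1) by (auto simp: Bad_def Tup_def)
  have pA: "p \<in> A" using p(1) xs(1) by (auto simp: Tup_def)
  hence Qp: "Q ! (p - j)" using p(2) by (simp add: B_def)
  have pj: "j \<le> p" "p - j < s" using pA jm by (auto simp: A_def)
  have "w ! (j + (p - j))" using mj Qp pj unfolding matches_at_def span_def s_def by blast
  moreover have "j + (p - j) = p" using pj by simp
  moreover have "p < m" using pA sm by (auto simp: A_def s_def)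
  moreover have "p \<in> Z" using p(1) by (simp add: Z_def Z0_def)
  ultimately show False by (simp add: w_def)
qed




lemma SW_facts:
  shows "finite {weight Q | Q. span Q \<le> m \<and> solves Q m k}"
    and "weight [] \<in> {weight Q | Q. span Q \<le> m \<and> solves Q m k}"
proof -
  have "{weight Q | Q. span Q \<le> m \<and> solves Q m k} \<subseteq> weight ` {xs. set xs \<subseteq> UNIV \<and> length xs \<le> m}"
    by (auto simp: span_def)
  moreover have "finite {xs. set xs \<subseteq> (UNIV::bool set) \<and> length xs \<le> m}"
    by (rule finite_lists_length_le) simp
  ultimately show "finite {weight Q | Q. span Q \<le> m \<and> solves Q m k}" using finite_subset by blast
  have "solves [] m k" by (auto simp: solves_def detects_def matches_at_def span_def)
  thus "weight [] \<in> {weight Q | Q. span Q \<le> m \<and> solves Q m k}" by (auto simp: span_def)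
qed

lemma max_weight_attained: "\<exists>Q. span Q \<le> m \<and> solves Q m k \<and> weight Q = max_weight k m"
proof -
  have "max_weight k m \<in> {weight Q | Q. span Q \<le> m \<and> solves Q m k}"
    unfolding max_weight_def using SW_facts[of m k] by (intro Max_in) blast+
  thus ?thesis by auto
qed

lemma max_weight_ge: "span Q \<le> m \<Longrightarrow> solves Q m k \<Longrightarrow> weight Q \<le> max_weight k m"
  unfolding max_weight_def using SW_facts(1) by (intro Max_ge) auto

lemma weight_le: "weight Q \<le> span Q"
  unfolding weight_def span_def by simp

lemma max_weight_le: "max_weight k m \<le> m"
  using max_weight_attained[of m k] weight_le by (metis order.trans)

lemma lower_real:
  fixes k m :: nat
  assumes k: "k \<ge> 1" and m4: "m \<ge> 4" and km: "k \<le> m"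
  shows "(real m / 4) powr (real k / real (k+1)) \<le> real m - real (max_weight k m)"
proof -
  define e where "e = real k / real (k+1)"
  have e01: "0 \<le> e" "e \<le> 1" by (auto simp: e_def)
  obtain Q where Q: "span Q \<le> m" "solves Q m k" "weight Q = max_weight k m"
    using max_weight_attained by blast
  define s where "s = length Q"
  define w where "w = weight Q"
  have ws: "w \<le> s" using weight_le by (simp add: w_def s_def span_def)
  have sm: "s \<le> m" using Q(1) by (simp add: s_def span_def)
  define a where "a = m - s"
  define J where "J = s - w"
  define D where "D = m - w"
  have DaJ: "D = a + J" using ws sm by (simp add: D_def a_def J_def)
  have Dreal: "real m - real (max_weight k m) = real D" using Q(3) ws sm by (simp add: D_def w_def)
  have LC: "(2 * s - m)^k \<le> (a + 1) * J^k"
    using lower_comb[OF Q(2) _ km] Q(1) by (simp add: s_def span_def a_def J_def w_def add.commute)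
  have m41: "1 \<le> real m / 4" using m4 by simp
  show ?thesis
  proof (cases "m \<le> 4 * a")
    case True
    have "(real m / 4) powr e \<le> (real m / 4) powr 1" using m41 e01 by (intro powr_mono) auto
    also have "\<dots> = real m / 4" by simp
    also have "\<dots> \<le> real D" using True DaJ by simp
    finally show ?thesis unfolding Dreal e_def .
  next
    case False
    have pos: "2 * s - m = m - 2 * a" using sm by (simp add: a_def)
    have half: "real m / 2 \<le> real (2 * s - m)" using False pos by simp
    have J0: "J \<noteq> 0"
    proof
      assume "J = 0"
      hence "(2 * s - m)^k \<le> 0" using LC k by (simp add: zero_power)
      thus False using False pos k by simp
    qed
    have "(a + 1) * J^k \<le> D * D^k" using J0 DaJ by (intro mult_le_mono power_mono) auto
    hence nat1: "(2 * s - m)^k \<le> D^(k+1)" using LC by simp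
    have "(real m / 2)^k \<le> real (2 * s - m) ^ k" using half m4 by (intro power_mono) auto
    also have "\<dots> \<le> real D ^ (k+1)" using nat1 by (metis of_nat_le_iff of_nat_power)
    finally have r1: "(real m / 2)^k \<le> real D ^ (k+1)" .
    have Dpos: "real D > 0" using J0 DaJ by simp
    have "(real m / 2) powr e = ((real m / 2) powr real k) powr (1 / real (k+1))"
      by (simp add: powr_powr e_def)
    also have "\<dots> = ((real m / 2) ^ k) powr (1 / real (k+1))" using m4 by (simp add: powr_realpow)
    also have "\<dots> \<le> (real D ^ (k+1)) powr (1 / real (k+1))" using r1 by (intro powr_mono2) auto
    also have "\<dots> = (real D powr real (k+1)) powr (1 / real (k+1))" using Dpos
      by (simp add: powr_realpow del: of_nat_Suc)
    also have "\<dots> = real D" using Dpos by (simp add: powr_powr del: of_nat_Suc)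
    finally have "(real m / 2) powr e \<le> real D" .
    moreover have "(real m / 4) powr e \<le> (real m / 2) powr e" using e01 by (intro powr_mono2) auto
    ultimately show ?thesis unfolding Dreal e_def by linarith
  qed
qed

lemma upper_real:
  fixes k m :: nat
  assumes m1: "m \<ge> 1"
  shows "real m - real (max_weight k m) \<le> 3 * real (k+1) * real m powr (real k / real (k+1))"
proof -
  define e where "e = real k / real (k+1)"
  define x where "x = real m powr (1 / real (k+1))"
  define a where "a = nat \<lfloor>x\<rfloor>"
  have x1: "1 \<le> x" unfolding x_def using m1 by (intro ge_one_powr_ge_zero) auto
  have ax: "real a \<le> x" using x1 by (simp add: a_def)
  have a1: "a \<ge> 1" using x1 by (simp add: a_def le_nat_iff)
  have x2a: "x \<le> 2 * real a" using x1 a1 by (simp add: a_def) linarith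
  have xk: "x ^ k = real m powr e"
  proof -
    have "x ^ k = x powr real k" using x1 by (simp add: powr_realpow)
    also have "\<dots> = real m powr e" by (simp add: x_def powr_powr e_def)
    finally show ?thesis .
  qed
  have ak: "real a ^ k \<le> real m powr e" using ax xk by (metis power_mono of_nat_0_le_iff)
  have me: "real m powr e \<le> real m"
  proof -
    have "real m powr e \<le> real m powr 1" using m1 by (intro powr_mono) (auto simp: e_def)
    thus ?thesis using m1 by simp
  qed
  have akm: "a^k \<le> m" using ak me by (metis of_nat_le_iff of_nat_power order.trans)
  obtain Q where Q: "span Q \<le> m" "solves Q m k" "m \<le> weight Q + (k+1) * (m div a + a^k)"
    using construction[OF a1 akm] by blast
  have "weight Q \<le> max_weight k m" using max_weight_ge Q by blast
  hence wq: "real (weight Q) \<le> real (max_weight k m)" by (simp only: of_nat_le_iff)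
  have r3: "real m \<le> real (weight Q) + real (k+1) * (real (m div a) + real a ^ k)"
  proof -
    have "real m \<le> real (weight Q + (k+1) * (m div a + a^k))" using Q(3) by (simp only: of_nat_le_iff)
    thus ?thesis by (simp only: of_nat_add of_nat_mult of_nat_power)
  qed
  have dv: "real (m div a) \<le> 2 * real m powr e"
  proof -
    have "real (m div a) \<le> real m / real a" by (rule of_nat_div_le_of_nat)
    also have "\<dots> \<le> real m / (x / 2)" using x2a x1 by (intro divide_left_mono) auto
    also have "\<dots> = 2 * (real m / x)" by simp
    also have "real m / x = real m powr e"
    proof -
      have "real m / x = real m powr 1 / real m powr (1 / real (k+1))" using m1 by (simp add: x_def)
      also have "\<dots> = real m powr (1 - 1 / real (k+1))" by (simp add: powr_diff)
      also have "1 - 1 / real (k+1) = e" by (simp add: e_def field_simps)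
      finally show ?thesis .
    qed
    finally show ?thesis .
  qed
  have "real (m div a) + real a ^ k \<le> 3 * real m powr e" using dv ak by linarith
  hence "real (k+1) * (real (m div a) + real a ^ k) \<le> real (k+1) * (3 * real m powr e)"
    by (intro mult_left_mono) auto
  hence "real m - real (max_weight k m) \<le> real (k+1) * (3 * real m powr e)" using r3 wq by linarith
  thus ?thesis unfolding e_def by (simp only: ac_simps)
qed

theorem mainTheorem8:
  fixes k :: nat
  assumes "k \<ge> 1"
  shows "(\<lambda>m. real m - real (max_weight k m)) \<in> \<Theta>(\<lambda>m. real m powr (real k / real (k + 1)))"
proof (rule bigthetaI')
  define e where "e = real k / real (k+1)"
  show "0 < 1 / 4 powr e" by simp
  show "0 < 3 * real (k+1)" by simp
  have "eventually (\<lambda>m. m \<ge> max 4 k) at_top" by (rule eventually_ge_at_top)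
  thus "\<forall>\<^sub>F m in at_top.
        1 / 4 powr e * norm (real m powr (real k / real (k + 1))) \<le> norm (real m - real (max_weight k m)) \<and>
        norm (real m - real (max_weight k m)) \<le> 3 * real (k+1) * norm (real m powr (real k / real (k + 1)))"
  proof eventually_elim
    case (elim m)
    have L: "(real m / 4) powr e \<le> real m - real (max_weight k m)"
      using lower_real[OF assms] elim unfolding e_def by simp
    have U: "real m - real (max_weight k m) \<le> 3 * real (k+1) * real m powr e"
      using upper_real elim unfolding e_def by simp
    have eq: "(real m / 4) powr e = 1 / 4 powr e * real m powr e" by (simp add: powr_divide)
    have nn: "0 \<le> real m - real (max_weight k m)" using max_weight_le[of k m] by simp
    show ?case using L U nn eq unfolding e_def by simp
  qed
qed


end
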